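(* Let $r\ge3$, $n>r$. The elements $K_1K_2\cdots K_n-v^r$ and $(K_i-1)(K_i-v)(K_i-v^2)\cdots(K_i-v^r)$ ($1\le i\le n$) of $\mathbf{U}(\widehat{\mathfrak{gl}}_n)$ act as zero on the tensor space $V^{\otimes r}$. Consequently $\widehat{\mathbf{S}}_v(n,r)$ is a quotient of the algebra $T$, via a surjection $\gamma:T\to\widehat{\mathbf{S}}_v(n,r)$ sending each generator to its action on $V^{\otimes r}$.
   Context: $\mathbf{U}(\widehat{\mathfrak{gl}}_n)$ is the $\mathbb{Q}(v)$-algebra with generators $E_i,F_i,K_i^{\pm1}$ ($1\le i\le n$, indices mod $n$) and relations (Q1) $K_iK_j=K_jK_i$; (Q2) $K_iK_i^{-1}=K_i^{-1}K_i=1$; (Q3) $K_iE_j=v^{\epsilon^+(i,j)}E_jK_i$; (Q4) $K_iF_j=v^{-\epsilon^+(i,j)}F_jK_i$, where $\epsilon^+(i,j)=1$ if $j=i$, $-1$ if $j\equiv i-1\pmod n$, $0$ otherwise; (Q5) $E_iF_j-F_jE_i=\delta_{ij}\frac{K_iK_{i+1}^{-1}-K_i^{-1}K_{i+1}}{v-v^{-1}}$; (Q6–Q7) $E_iE_j=E_jE_i$, $F_iF_j=F_jF_i$ if $i-j\not\equiv\pm1$; (Q8–Q9) $E_i^2E_j-(v+v^{-1})E_iE_jE_i+E_jE_i^2=0$, $F_i^2F_j-(v+v^{-1})F_iF_jF_i+F_jF_i^2=0$ if $i-j\equiv\pm1\pmod n$. $T$ is the quotient of $\mathbf{U}(\widehat{\mathfrak{gl}}_n)$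 by the additional relations $K_1\cdots K_n=v^r$ and $\prod_{j=0}^r(K_i-v^j)=0$ for all $i$. $V$ has basis $e_t$ ($t\in\mathbb{Z}$) with $E_ie_{t+1}=e_t$ if $i\equiv t\pmod n$ (else $0$), $F_ie_t=e_{t+1}$ if $i\equiv t$ (else $0$), $K_ie_t=ve_t$ if $i\equiv t$ (else $e_t$); $V^{\otimes r}$ is a module via iterating $\Delta(E_i)=E_i\otimes K_iK_{i+1}^{-1}+1\otimes E_i$, $\Delta(F_i)=K_i^{-1}K_{i+1}\otimes F_i+F_i\otimes1$, $\Delta(K_i^{\pm1})=K_i^{\pm1}\otimes K_i^{\pm1}$. $\widehat{\mathbf{S}}_v(n,r)$ is the image of $\mathbf{U}(\widehat{\mathfrak{gl}}_n)$ in $\operatorname{End}_{\mathbb{Q}(v)}(V^{\otimes r})$. *)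

theory Defs
  imports "HOL-Computational_Algebra.Polynomial" "HOL-Computational_Algebra.Fraction_Field"
          "HOL-Number_Theory.Cong"
begin

type_synonym qv = "rat poly fract"

definition vv :: qv where "vv = Fract [:0, 1:] 1"

text \<open>A vector of V is a coefficient function int => Q(v) (coefficient of e_t);
  a vector of the tensor power is a coefficient function on int lists
  (the list [t1,...,tr] indexes e_t1 (x) ... (x) e_tr).\<close>

type_synonym vec = "int list \<Rightarrow> qv"

definition bas :: "'a \<Rightarrow> 'a \<Rightarrow> qv" where
  "bas w = (\<lambda>u. if u = w then 1 else 0)"

definition vadd :: "('a \<Rightarrow> qv) \<Rightarrow> ('a \<Rightarrow> qv) \<Rightarrow> 'a \<Rightarrow> qv" where
  "vadd f g = (\<lambda>u. f u + g u)"

definition vsub :: "('a \<Rightarrow> qv) \<Rightarrow> ('a \<Rightarrow> qv) \<Rightarrow> 'a \<Rightarrow> qv" where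
  "vsub f g = (\<lambda>u. f u - g u)"

definition vscale :: "qv \<Rightarrow> ('a \<Rightarrow> qv) \<Rightarrow> 'a \<Rightarrow> qv" where
  "vscale c f = (\<lambda>u. c * f u)"

text \<open>Linear extension of a map given on basis vectors (B w = image of the
  basis vector indexed by w); meant to be applied to finitely supported vectors.\<close>
definition lin :: "('a \<Rightarrow> 'a \<Rightarrow> qv) \<Rightarrow> ('a \<Rightarrow> qv) \<Rightarrow> 'a \<Rightarrow> qv" where
  "lin B f = (\<lambda>u. \<Sum>w\<in>{w. f w \<noteq> 0}. f w * B w u)"

definition tens :: "(int \<Rightarrow> qv) \<Rightarrow> vec \<Rightarrow> vec" where
  "tens x y = (\<lambda>u. case u of [] \<Rightarrow> 0 | a # u' \<Rightarrow> x a * y u')"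

definition Vr :: "nat \<Rightarrow> vec set" where
  "Vr r = {f. finite {w. f w \<noteq> 0} \<and> (\<forall>w. f w \<noteq> 0 \<longrightarrow> length w = r)}"

definition E1 :: "nat \<Rightarrow> int \<Rightarrow> int \<Rightarrow> int \<Rightarrow> qv" where
  "E1 n i s = (if [i = s - 1] (mod int n) then bas (s - 1) else (\<lambda>_. 0))"

definition F1 :: "nat \<Rightarrow> int \<Rightarrow> int \<Rightarrow> int \<Rightarrow> qv" where
  "F1 n i s = (if [i = s] (mod int n) then bas (s + 1) else (\<lambda>_. 0))"

definition K1 :: "nat \<Rightarrow> int \<Rightarrow> int \<Rightarrow> int \<Rightarrow> qv" where
  "K1 n i s = (if [i = s] (mod int n) then vscale vv (bas s) else bas s)"

definition Kinv1 :: "nat \<Rightarrow> int \<Rightarrow> int \<Rightarrow> int \<Rightarrow> qv" where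
  "Kinv1 n i s = (if [i = s] (mod int n) then vscale (inverse vv) (bas s) else bas s)"

text \<open>Values on basis vectors, by recursion V^(tensor (k+1)) = V (tensor) V^(tensor k),
  i.e. iterating Delta as (id (tensor) Delta^(k-1)) o Delta; the empty list is the
  trivial module Q(v) (counit: E,F act by 0, K by 1).\<close>

fun KB :: "nat \<Rightarrow> int \<Rightarrow> int list \<Rightarrow> vec" where
  "KB n i [] = bas []"
| "KB n i (t # w) = tens (K1 n i t) (KB n i w)"

fun KinvB :: "nat \<Rightarrow> int \<Rightarrow> int list \<Rightarrow> vec" where
  "KinvB n i [] = bas []"
| "KinvB n i (t # w) = tens (Kinv1 n i t) (KinvB n i w)"

fun EB :: "nat \<Rightarrow> int \<Rightarrow> int list \<Rightarrow> vec" where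
  "EB n i [] = (\<lambda>_. 0)"
| "EB n i (t # w) =
     vadd (tens (E1 n i t) (lin (KB n i) (lin (KinvB n (i + 1)) (bas w))))
          (tens (bas t) (EB n i w))"

fun FB :: "nat \<Rightarrow> int \<Rightarrow> int list \<Rightarrow> vec" where
  "FB n i [] = (\<lambda>_. 0)"
| "FB n i (t # w) =
     vadd (tens (lin (Kinv1 n i) (K1 n (i + 1) t)) (FB n i w))
          (tens (F1 n i t) (bas w))"

definition opE :: "nat \<Rightarrow> int \<Rightarrow> vec \<Rightarrow> vec" where "opE n i = lin (EB n i)"
definition opF :: "nat \<Rightarrow> int \<Rightarrow> vec \<Rightarrow> vec" where "opF n i = lin (FB n i)"
definition opK :: "nat \<Rightarrow> int \<Rightarrow> vec \<Rightarrow> vec" where "opK n i = lin (KB n i)"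
definition opKinv :: "nat \<Rightarrow> int \<Rightarrow> vec \<Rightarrow> vec" where "opKinv n i = lin (KinvB n i)"

definition opprod :: "(vec \<Rightarrow> vec) list \<Rightarrow> vec \<Rightarrow> vec" where
  "opprod ops = foldr (\<circ>) ops id"

definition epsp :: "nat \<Rightarrow> int \<Rightarrow> int \<Rightarrow> int" where
  "epsp n i j = (if [j = i] (mod int n) then 1
                 else if [j = i - 1] (mod int n) then -1 else 0)"

definition adjacent :: "nat \<Rightarrow> int \<Rightarrow> int \<Rightarrow> bool" where
  "adjacent n i j \<longleftrightarrow> [i - j = 1] (mod int n) \<or> [i - j = -1] (mod int n)"

definition T_extra_relations ::
  "nat \<Rightarrow> nat \<Rightarrow> vec set \<Rightarrow> (int \<Rightarrow> vec \<Rightarrow> vec) \<Rightarrow> bool" where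
  "T_extra_relations n r W K \<longleftrightarrow>
     (\<forall>f\<in>W. opprod (map K [1..int n]) f = vscale (vv ^ r) f) \<and>
     (\<forall>i\<in>{1..int n}. \<forall>f\<in>W.
        opprod (map (\<lambda>j. \<lambda>g. vsub (K i g) (vscale (vv ^ j) g)) [0..<r+1]) f = (\<lambda>_. 0))"

text \<open>By the universal property of an algebra given by
  generators and relations, this is exactly the existence of an algebra
  homomorphism from T into End(W) sending E_i, F_i, K_i, K_i^(-1) to E i, F i, K i, Kinv i.\<close>
definition T_relations ::
  "nat \<Rightarrow> nat \<Rightarrow> vec set \<Rightarrow> (int \<Rightarrow> vec \<Rightarrow> vec) \<Rightarrow> (int \<Rightarrow> vec \<Rightarrow> vec)
     \<Rightarrow> (int \<Rightarrow> vec \<Rightarrow> vec) \<Rightarrow> (int \<Rightarrow> vec \<Rightarrow> vec) \<Rightarrow> bool" where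
  "T_relations n r W E F K Kinv \<longleftrightarrow>
     (\<forall>i\<in>{1..int n}. \<forall>j\<in>{1..int n}. \<forall>f\<in>W.
        K i (K j f) = K j (K i f) \<and>
        K i (Kinv i f) = f \<and> Kinv i (K i f) = f \<and>
        K i (E j f) = vscale (vv powi epsp n i j) (E j (K i f)) \<and>
        K i (F j f) = vscale (vv powi (- epsp n i j)) (F j (K i f)) \<and>
        vsub (E i (F j f)) (F j (E i f)) =
          (if i = j then vscale (inverse (vv - inverse vv))
                           (vsub (K i (Kinv (i + 1) f)) (Kinv i (K (i + 1) f)))
           else (\<lambda>_. 0)) \<and>
        (\<not> adjacent n i j \<longrightarrow> E i (E j f) = E j (E i f) \<and> F i (F j f) = F j (F i f)) \<and>
        (adjacent n i j \<longrightarrow>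
           vadd (vsub (E i (E i (E j f))) (vscale (vv + inverse vv) (E i (E j (E i f)))))
                (E j (E i (E i f))) = (\<lambda>_. 0) \<and>
           vadd (vsub (F i (F i (F j f))) (vscale (vv + inverse vv) (F i (F j (F i f)))))
                (F j (F i (F i f))) = (\<lambda>_. 0))) \<and>
     T_extra_relations n r W K"

end

theory Submission
  imports Defs
begin


lemma vv_nz[simp]: "vv \<noteq> 0"
  by (simp add: vv_def Zero_fract_def eq_fract)

lemma vv_sq: "vv * vv \<noteq> 1"
  by (simp add: vv_def One_fract_def eq_fract one_pCons)

lemma vv_diff_nz[simp]: "vv - inverse vv \<noteq> 0"
proof
  assume "vv - inverse vv = 0"
  then have "vv * (vv - inverse vv) = 0" by simp
  then have "vv * vv = 1" using vv_nz by (simp add: algebra_simps)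
  then show False using vv_sq by simp
qed

lemma vv_powi_nz[simp]: "vv powi k \<noteq> 0"
  by (simp add: power_int_eq_0_iff)

section \<open>Finite support and linear extension\<close>

definition fin :: "('a \<Rightarrow> qv) \<Rightarrow> bool" where
  "fin f \<longleftrightarrow> finite {w. f w \<noteq> 0}"

lemma lin_eq_sum:
  assumes "finite S" "{w. f w \<noteq> 0} \<subseteq> S"
  shows "lin B f u = (\<Sum>w\<in>S. f w * B w u)"
  unfolding lin_def using assms by (intro sum.mono_neutral_left) auto

lemma lin_bas[simp]: "lin B (bas w) = B w"
proof -
  have "{w'. bas w w' \<noteq> 0} = {w}" by (auto simp: bas_def)
  then show ?thesis by (auto simp: lin_def bas_def)
qed

lemma lin_vadd:
  assumes "fin f" "fin g"
  shows "lin B (vadd f g) = vadd (lin B f) (lin B g)"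
proof
  fix u
  let ?S = "{w. f w \<noteq> 0} \<union> {w. g w \<noteq> 0}"
  have fS: "finite ?S" using assms by (auto simp: fin_def)
  have "lin B (vadd f g) u = (\<Sum>w\<in>?S. vadd f g w * B w u)"
    by (rule lin_eq_sum[OF fS]) (auto simp: vadd_def)
  also have "\<dots> = (\<Sum>w\<in>?S. f w * B w u) + (\<Sum>w\<in>?S. g w * B w u)"
    by (simp add: vadd_def distrib_right sum.distrib)
  also have "\<dots> = lin B f u + lin B g u"
  proof -
    have "lin B f u = (\<Sum>w\<in>?S. f w * B w u)" by (rule lin_eq_sum[OF fS]) blast
    moreover have "lin B g u = (\<Sum>w\<in>?S. g w * B w u)" by (rule lin_eq_sum[OF fS]) blast
    ultimately show ?thesis by simp
  qed
  finally show "lin B (vadd f g) u = vadd (lin B f) (lin B g) u" by (simp add: vadd_def)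
qed

lemma lin_vscale:
  assumes "fin f"
  shows "lin B (vscale c f) = vscale c (lin B f)"
proof
  fix u
  let ?S = "{w. f w \<noteq> 0}"
  have fS: "finite ?S" using assms by (auto simp: fin_def)
  have "lin B (vscale c f) u = (\<Sum>w\<in>?S. vscale c f w * B w u)"
    by (rule lin_eq_sum[OF fS]) (auto simp: vscale_def)
  also have "\<dots> = c * (\<Sum>w\<in>?S. f w * B w u)"
    by (simp add: vscale_def sum_distrib_left mult.assoc)
  also have "\<dots> = c * lin B f u"
    using lin_eq_sum[OF fS, of f] by simp
  finally show "lin B (vscale c f) u = vscale c (lin B f) u" by (simp add: vscale_def)
qed

lemma lin_zero[simp]: "lin B (\<lambda>_. 0) = (\<lambda>_. 0)"
  by (simp add: lin_def)

lemma fin_lin: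
  assumes "fin f" "\<And>w. fin (B w)"
  shows "fin (lin B f)"
proof -
  have "{u. lin B f u \<noteq> 0} \<subseteq> (\<Union>w\<in>{w. f w \<noteq> 0}. {u. B w u \<noteq> 0})"
  proof
    fix u assume "u \<in> {u. lin B f u \<noteq> 0}"
    then have "(\<Sum>w\<in>{w. f w \<noteq> 0}. f w * B w u) \<noteq> 0" by (simp add: lin_def)
    then obtain w where "w \<in> {w. f w \<noteq> 0}" "f w * B w u \<noteq> 0"
      by (rule sum.not_neutral_contains_not_neutral)
    then show "u \<in> (\<Union>w\<in>{w. f w \<noteq> 0}. {u. B w u \<noteq> 0})" by auto
  qed
  moreover have "finite (\<Union>w\<in>{w. f w \<noteq> 0}. {u. B w u \<noteq> 0})"
    using assms unfolding fin_def by (intro finite_UN_I) simp_all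
  ultimately show ?thesis unfolding fin_def by (rule finite_subset)
qed

lemma fin_zero[simp]: "fin (\<lambda>_. 0)" by (simp add: fin_def)
lemma fin_bas[simp]: "fin (bas w)"
proof -
  have "{u. bas w u \<noteq> 0} = {w}" by (auto simp: bas_def)
  then show ?thesis by (simp add: fin_def)
qed
lemma fin_vadd[simp]: "fin f \<Longrightarrow> fin g \<Longrightarrow> fin (vadd f g)"
  unfolding fin_def vadd_def
  by (rule finite_subset[of _ "{w. f w \<noteq> 0} \<union> {w. g w \<noteq> 0}"]) auto
lemma fin_vsub[simp]: "fin f \<Longrightarrow> fin g \<Longrightarrow> fin (vsub f g)"
  unfolding fin_def vsub_def
  by (rule finite_subset[of _ "{w. f w \<noteq> 0} \<union> {w. g w \<noteq> 0}"]) auto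
lemma fin_vscale[simp]: "fin f \<Longrightarrow> fin (vscale c f)"
  unfolding fin_def vscale_def
  by (rule finite_subset[of _ "{w. f w \<noteq> 0}"]) auto

lemma fin_tens[simp]:
  assumes "fin x" "fin y" shows "fin (tens x y)"
proof -
  have "{u. tens x y u \<noteq> 0} \<subseteq> (\<lambda>(a,u). a # u) ` ({a. x a \<noteq> 0} \<times> {u. y u \<noteq> 0})"
  proof
    fix u assume "u \<in> {u. tens x y u \<noteq> 0}"
    then show "u \<in> (\<lambda>(a,u). a # u) ` ({a. x a \<noteq> 0} \<times> {u. y u \<noteq> 0})"
      by (cases u) (auto simp: tens_def)
  qed
  moreover have "finite ((\<lambda>(a,u). a # u) ` ({a. x a \<noteq> 0} \<times> {u. y u \<noteq> 0}))"
    using assms unfolding fin_def by (intro finite_imageI finite_cartesian_product)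
  ultimately show ?thesis unfolding fin_def by (rule finite_subset)
qed

lemma tens_vaddL: "tens (vadd x1 x2) y = vadd (tens x1 y) (tens x2 y)"
  by (rule ext, simp add: tens_def vadd_def split: list.split) (simp add: algebra_simps)
lemma tens_vaddR: "tens x (vadd y1 y2) = vadd (tens x y1) (tens x y2)"
  by (rule ext, simp add: tens_def vadd_def split: list.split) (simp add: algebra_simps)
lemma tens_vsubL: "tens (vsub x1 x2) y = vsub (tens x1 y) (tens x2 y)"
  by (rule ext, simp add: tens_def vsub_def split: list.split) (simp add: algebra_simps)
lemma tens_vsubR: "tens x (vsub y1 y2) = vsub (tens x y1) (tens x y2)"
  by (rule ext, simp add: tens_def vsub_def split: list.split) (simp add: algebra_simps)
lemma tens_vscaleL: "tens (vscale c x) y = vscale c (tens x y)"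
  by (rule ext, simp add: tens_def vscale_def split: list.split)
lemma tens_vscaleR: "tens x (vscale c y) = vscale c (tens x y)"
  by (rule ext, simp add: tens_def vscale_def split: list.split)
lemma tens_zeroL[simp]: "tens (\<lambda>_. 0) y = (\<lambda>_. 0)"
  by (rule ext, simp add: tens_def split: list.split)
lemma tens_zeroR[simp]: "tens x (\<lambda>_. 0) = (\<lambda>_. 0)"
  by (rule ext, simp add: tens_def split: list.split)
lemma tens_bas[simp]: "tens (bas t) (bas w) = bas (t # w)"
  by (rule ext, simp add: tens_def bas_def split: list.split)
lemma tens_Nil[simp]: "tens x y [] = 0" by (simp add: tens_def)
lemma tens_Cons[simp]: "tens x y (a # u) = x a * y u" by (simp add: tens_def)

definition flin :: "(('a \<Rightarrow> qv) \<Rightarrow> ('b \<Rightarrow> qv)) \<Rightarrow> bool" where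
  "flin P \<longleftrightarrow> (\<forall>f g. fin f \<longrightarrow> fin g \<longrightarrow> P (vadd f g) = vadd (P f) (P g)) \<and>
              (\<forall>c f. fin f \<longrightarrow> P (vscale c f) = vscale c (P f))"

definition pfin :: "(('a \<Rightarrow> qv) \<Rightarrow> ('b \<Rightarrow> qv)) \<Rightarrow> bool" where
  "pfin P \<longleftrightarrow> (\<forall>f. fin f \<longrightarrow> fin (P f))"

lemma flin_ext_aux:
  assumes P: "flin P" and Q: "flin Q" and B: "\<And>w. P (bas w) = Q (bas w)" and S: "finite S"
  shows "\<forall>f. {w. f w \<noteq> 0} \<subseteq> S \<longrightarrow> P f = Q f"
  using S
proof induction
  case empty
  show ?case
  proof (intro allI impI)
    fix f :: "'a \<Rightarrow> qv" assume "{w. f w \<noteq> 0} \<subseteq> {}"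
    then have f: "f = vscale 0 (bas undefined)" by (auto simp: vscale_def)
    have "P f = vscale 0 (P (bas undefined))" using P unfolding flin_def f by simp
    moreover have "Q f = vscale 0 (Q (bas undefined))" using Q unfolding flin_def f by simp
    ultimately show "P f = Q f" using B by simp
  qed
next
  case (insert a S)
  show ?case
  proof (intro allI impI)
    fix f :: "'a \<Rightarrow> qv" assume sub: "{w. f w \<noteq> 0} \<subseteq> insert a S"
    define g where "g = f(a := 0)"
    define c where "c = f a"
    have f: "f = vadd (vscale c (bas a)) g"
      by (auto simp: g_def c_def vadd_def vscale_def bas_def)
    have gS: "{w. g w \<noteq> 0} \<subseteq> S" using sub by (auto simp: g_def)
    then have "P g = Q g" using insert.IH by blast
    moreover have "fin g" using gS insert.hyps(1) unfolding fin_def by (rule finite_subset)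
    ultimately have XY: "vadd (vscale c (P (bas a))) (P g) = vadd (vscale c (Q (bas a))) (Q g)"
      using B by simp
    have PX: "P f = vadd (vscale c (P (bas a))) (P g)"
    proof -
      have "P f = P (vadd (vscale c (bas a)) g)" by (rule arg_cong[OF f])
      also have "\<dots> = vadd (P (vscale c (bas a))) (P g)"
        using P \<open>fin g\<close> unfolding flin_def by (meson fin_bas fin_vscale)
      also have "P (vscale c (bas a)) = vscale c (P (bas a))"
        using P unfolding flin_def by (meson fin_bas)
      finally show ?thesis .
    qed
    have QY: "Q f = vadd (vscale c (Q (bas a))) (Q g)"
    proof -
      have "Q f = Q (vadd (vscale c (bas a)) g)" by (rule arg_cong[OF f])
      also have "\<dots> = vadd (Q (vscale c (bas a))) (Q g)"
        using Q \<open>fin g\<close> unfolding flin_def by (meson fin_bas fin_vscale)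
      also have "Q (vscale c (bas a)) = vscale c (Q (bas a))"
        using Q unfolding flin_def by (meson fin_bas)
      finally show ?thesis .
    qed
    show "P f = Q f" using PX QY XY by simp
  qed
qed

lemma flin_ext:
  assumes "flin P" "flin Q" "\<And>w. P (bas w) = Q (bas w)" "fin f"
  shows "P f = Q f"
proof -
  have "finite {w. f w \<noteq> 0}" using assms(4) by (simp add: fin_def)
  from flin_ext_aux[OF assms(1-3) this] show ?thesis by blast
qed

lemma flin_id: "flin (\<lambda>f. f)" by (simp add: flin_def)
lemma pfin_id: "pfin (\<lambda>f. f)" by (simp add: pfin_def)

lemma flin_lin: "flin P \<Longrightarrow> pfin P \<Longrightarrow> flin (\<lambda>f. lin B (P f))"
  by (simp add: flin_def pfin_def lin_vadd lin_vscale)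
lemma pfin_lin: "pfin P \<Longrightarrow> (\<And>w. fin (B w)) \<Longrightarrow> pfin (\<lambda>f. lin B (P f))"
  by (simp add: pfin_def fin_lin)

lemma flin_tensL: "flin P \<Longrightarrow> flin (\<lambda>f. tens (P f) y)"
  by (simp add: flin_def tens_vaddL tens_vscaleL)
lemma flin_tensR: "flin P \<Longrightarrow> flin (\<lambda>f. tens x (P f))"
  by (simp add: flin_def tens_vaddR tens_vscaleR)
lemma pfin_tensL: "pfin P \<Longrightarrow> fin y \<Longrightarrow> pfin (\<lambda>f. tens (P f) y)"
  by (simp add: pfin_def)
lemma pfin_tensR: "pfin P \<Longrightarrow> fin x \<Longrightarrow> pfin (\<lambda>f. tens x (P f))"
  by (simp add: pfin_def)

lemma flin_vadd: "flin P \<Longrightarrow> flin Q \<Longrightarrow> flin (\<lambda>f. vadd (P f) (Q f))"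
  by (simp add: flin_def vadd_def vscale_def fun_eq_iff algebra_simps)
lemma flin_vsub: "flin P \<Longrightarrow> flin Q \<Longrightarrow> flin (\<lambda>f. vsub (P f) (Q f))"
  by (simp add: flin_def vadd_def vsub_def vscale_def fun_eq_iff algebra_simps)
lemma flin_vscale: "flin P \<Longrightarrow> flin (\<lambda>f. vscale c (P f))"
  by (simp add: flin_def vadd_def vscale_def fun_eq_iff algebra_simps)
lemma flin_zero: "flin (\<lambda>f u. 0)"
  by (simp add: flin_def vadd_def vscale_def fun_eq_iff)
lemma pfin_vadd: "pfin P \<Longrightarrow> pfin Q \<Longrightarrow> pfin (\<lambda>f. vadd (P f) (Q f))"
  by (simp add: pfin_def)
lemma pfin_vsub: "pfin P \<Longrightarrow> pfin Q \<Longrightarrow> pfin (\<lambda>f. vsub (P f) (Q f))"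
  by (simp add: pfin_def)
lemma pfin_vscale: "pfin P \<Longrightarrow> pfin (\<lambda>f. vscale c (P f))"
  by (simp add: pfin_def)

definition diagop :: "('a \<Rightarrow> int) \<Rightarrow> ('a \<Rightarrow> qv) \<Rightarrow> 'a \<Rightarrow> qv" where
  "diagop d f u = vv powi (d u) * f u"

lemma fin_diagop[simp]: "fin f \<Longrightarrow> fin (diagop d f)"
  unfolding fin_def diagop_def
  by (rule finite_subset[of _ "{w. f w \<noteq> 0}"]) auto

lemma flin_diag: "flin P \<Longrightarrow> flin (\<lambda>f. diagop d (P f))"
  by (simp add: flin_def vadd_def vscale_def diagop_def fun_eq_iff algebra_simps)
lemma pfin_diag: "pfin P \<Longrightarrow> pfin (\<lambda>f. diagop d (P f))"
  by (simp add: pfin_def)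

lemma diagop_vadd: "diagop d (vadd f g) = vadd (diagop d f) (diagop d g)"
  by (simp add: vadd_def diagop_def fun_eq_iff algebra_simps)
lemma diagop_vsub: "diagop d (vsub f g) = vsub (diagop d f) (diagop d g)"
  by (simp add: vsub_def diagop_def fun_eq_iff algebra_simps)
lemma diagop_vscale: "diagop d (vscale c f) = vscale c (diagop d f)"
  by (simp add: vscale_def diagop_def fun_eq_iff algebra_simps)
lemma diagop_zero[simp]: "diagop d (\<lambda>_. 0) = (\<lambda>_. 0)"
  by (simp add: diagop_def fun_eq_iff)
lemma diagop_bas: "diagop d (bas w) = vscale (vv powi d w) (bas w)"
  by (simp add: vscale_def diagop_def fun_eq_iff bas_def)

lemma lin_diag:
  assumes "fin f"
  shows "lin (\<lambda>w. vscale (vv powi d w) (bas w)) f = diagop d f"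
proof
  fix u
  let ?S = "insert u {w. f w \<noteq> 0}"
  have fS: "finite ?S" using assms by (auto simp: fin_def)
  have "lin (\<lambda>w. vscale (vv powi d w) (bas w)) f u
        = (\<Sum>w\<in>?S. f w * vscale (vv powi d w) (bas w) u)"
    by (rule lin_eq_sum[OF fS]) auto
  also have "\<dots> = (\<Sum>w\<in>?S. if w = u then f u * vv powi d u else 0)"
    by (rule sum.cong) (auto simp: vscale_def bas_def)
  also have "\<dots> = diagop d f u" using fS by (simp add: diagop_def)
  finally show "lin (\<lambda>w. vscale (vv powi d w) (bas w)) f u = diagop d f u" .
qed


lemma vscale_vscale[simp]: "vscale a (vscale b f) = vscale (a * b) f"
  by (simp add: vscale_def fun_eq_iff)
lemma vscale_one[simp]: "vscale 1 f = f"
  by (simp add: vscale_def fun_eq_iff)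

section \<open>Weights\<close>

definition wV :: "nat \<Rightarrow> int \<Rightarrow> int \<Rightarrow> int" where
  "wV n k a = (if [k = a] (mod int n) then 1 else 0)"
definition wW :: "nat \<Rightarrow> int \<Rightarrow> int list \<Rightarrow> int" where
  "wW n k u = int (length (filter (\<lambda>s. [k = s] (mod int n)) u))"

lemma wW_Nil[simp]: "wW n k [] = 0" by (simp add: wW_def)
lemma wW_Cons[simp]: "wW n k (a # u) = wV n k a + wW n k u"
  by (simp add: wW_def wV_def)

definition dLV :: "nat \<Rightarrow> int \<Rightarrow> int \<Rightarrow> int" where
  "dLV n i a = wV n i a - wV n (i + 1) a"
definition dNV :: "nat \<Rightarrow> int \<Rightarrow> int \<Rightarrow> int" where
  "dNV n i a = wV n (i + 1) a - wV n i a"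
definition dLW :: "nat \<Rightarrow> int \<Rightarrow> int list \<Rightarrow> int" where
  "dLW n i u = wW n i u - wW n (i + 1) u"

lemma K1_eq: "K1 n k t = vscale (vv powi wV n k t) (bas t)"
  by (simp add: K1_def wV_def)
lemma Kinv1_eq: "Kinv1 n k t = vscale (vv powi (- wV n k t)) (bas t)"
  by (simp add: Kinv1_def wV_def power_int_minus)

lemma KB_eq: "KB n k w = vscale (vv powi wW n k w) (bas w)"
  by (induction w) (simp_all add: K1_eq tens_vscaleL tens_vscaleR power_int_add mult_ac)
lemma KinvB_eq: "KinvB n k w = vscale (vv powi (- wW n k w)) (bas w)"
  by (induction w) (simp_all add: Kinv1_eq tens_vscaleL tens_vscaleR power_int_diff
     power_int_minus field_simps)

lemma opK_eq: "fin f \<Longrightarrow> opK n k f = diagop (wW n k) f"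
  unfolding opK_def KB_eq by (rule lin_diag)
lemma opKinv_eq: "fin f \<Longrightarrow> opKinv n k f = diagop (\<lambda>u. - wW n k u) f"
  unfolding opKinv_def KinvB_eq by (rule lin_diag)

lemma fin_E1[simp]: "fin (E1 n i t)" by (simp add: E1_def)
lemma fin_F1[simp]: "fin (F1 n i t)" by (simp add: F1_def)

lemma EB_Cons': "EB n i (t # w) =
   vadd (tens (E1 n i t) (diagop (dLW n i) (bas w))) (tens (bas t) (EB n i w))"
  by (simp add: KB_eq KinvB_eq lin_vscale diagop_bas dLW_def power_int_diff power_int_minus
      field_simps)

lemma FB_Cons': "FB n i (t # w) =
   vadd (tens (diagop (dNV n i) (bas t)) (FB n i w)) (tens (F1 n i t) (bas w))"
  by (simp add: K1_eq Kinv1_eq lin_vscale diagop_bas dNV_def power_int_diff power_int_minus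
      field_simps)

lemma fin_EB[simp]: "fin (EB n i w)"
  by (induction w) (simp_all add: EB_Cons' del: EB.simps(2))
lemma fin_FB[simp]: "fin (FB n i w)"
  by (induction w) (simp_all add: FB_Cons' del: FB.simps(2))

lemma fin_opE[simp]: "fin f \<Longrightarrow> fin (opE n i f)" by (simp add: opE_def fin_lin)
lemma fin_opF[simp]: "fin f \<Longrightarrow> fin (opF n i f)" by (simp add: opF_def fin_lin)
lemma fin_linE1[simp]: "fin f \<Longrightarrow> fin (lin (E1 n i) f)" by (simp add: fin_lin)
lemma fin_linF1[simp]: "fin f \<Longrightarrow> fin (lin (F1 n i) f)" by (simp add: fin_lin)

lemma lin_vsub: "fin f \<Longrightarrow> fin g \<Longrightarrow> lin B (vsub f g) = vsub (lin B f) (lin B g)"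
proof -
  assume a: "fin f" "fin g"
  have e: "vsub f g = vadd f (vscale (-1) g)" by (simp add: vsub_def vadd_def vscale_def fun_eq_iff)
  have "lin B (vsub f g) = lin B (vadd f (vscale (-1) g))" by (simp only: e)
  also have "\<dots> = vadd (lin B f) (vscale (-1) (lin B g))" using a by (simp add: lin_vadd lin_vscale)
  also have "\<dots> = vsub (lin B f) (lin B g)" by (simp add: vsub_def vadd_def vscale_def fun_eq_iff)
  finally show ?thesis .
qed

lemma opE_vadd[simp]: "fin f \<Longrightarrow> fin g \<Longrightarrow> opE n i (vadd f g) = vadd (opE n i f) (opE n i g)"
  by (simp add: opE_def lin_vadd)
lemma opE_vsub[simp]: "fin f \<Longrightarrow> fin g \<Longrightarrow> opE n i (vsub f g) = vsub (opE n i f) (opE n i g)"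
  by (simp add: opE_def lin_vsub)
lemma opF_vsub[simp]: "fin f \<Longrightarrow> fin g \<Longrightarrow> opF n i (vsub f g) = vsub (opF n i f) (opF n i g)"
  by (simp add: opF_def lin_vsub)
lemma opE_vscale[simp]: "fin f \<Longrightarrow> opE n i (vscale c f) = vscale c (opE n i f)"
  by (simp add: opE_def lin_vscale)
lemma opF_vadd[simp]: "fin f \<Longrightarrow> fin g \<Longrightarrow> opF n i (vadd f g) = vadd (opF n i f) (opF n i g)"
  by (simp add: opF_def lin_vadd)
lemma opF_vscale[simp]: "fin f \<Longrightarrow> opF n i (vscale c f) = vscale c (opF n i f)"
  by (simp add: opF_def lin_vscale)
lemma opE_zero[simp]: "opE n i (\<lambda>_. 0) = (\<lambda>_. 0)" by (simp add: opE_def)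
lemma opF_zero[simp]: "opF n i (\<lambda>_. 0) = (\<lambda>_. 0)" by (simp add: opF_def)

lemmas flin_intros = flin_id flin_lin flin_tensL flin_tensR flin_vadd flin_vsub flin_vscale
  flin_diag flin_zero
lemmas pfin_intros = pfin_id pfin_lin pfin_tensL pfin_tensR pfin_vadd pfin_vsub pfin_vscale
  pfin_diag

section \<open>Tensor formulas\<close>

lemma opE_tens:
  assumes "fin x" "fin y"
  shows "opE n i (tens x y) =
         vadd (tens (lin (E1 n i) x) (diagop (dLW n i) y)) (tens x (opE n i y))"
proof -
  have base: "opE n i (tens (bas t) y) =
         vadd (tens (E1 n i t) (diagop (dLW n i) y)) (tens (bas t) (opE n i y))"
    if "fin y" for t y
  proof (rule flin_ext[of "\<lambda>y. opE n i (tens (bas t) y)"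
       "\<lambda>y. vadd (tens (E1 n i t) (diagop (dLW n i) y)) (tens (bas t) (opE n i y))", OF _ _ _ that])
    show "flin (\<lambda>y. opE n i (tens (bas t) y))" unfolding opE_def
      by (intro flin_intros pfin_intros; simp)
    show "flin (\<lambda>y. vadd (tens (E1 n i t) (diagop (dLW n i) y)) (tens (bas t) (opE n i y)))"
      unfolding opE_def by (intro flin_intros pfin_intros; simp)
    show "opE n i (tens (bas t) (bas w)) =
          vadd (tens (E1 n i t) (diagop (dLW n i) (bas w))) (tens (bas t) (opE n i (bas w)))" for w
      by (simp add: opE_def EB_Cons' del: EB.simps(2))
  qed
  show ?thesis
  proof (rule flin_ext[of "\<lambda>x. opE n i (tens x y)"
       "\<lambda>x. vadd (tens (lin (E1 n i) x) (diagop (dLW n i) y)) (tens x (opE n i y))", OF _ _ _ assms(1)])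
    show "flin (\<lambda>x. opE n i (tens x y))" unfolding opE_def
      using assms(2) by (intro flin_intros pfin_intros; simp)
    show "flin (\<lambda>x. vadd (tens (lin (E1 n i) x) (diagop (dLW n i) y)) (tens x (opE n i y)))"
      by (intro flin_intros pfin_intros; simp)
    show "opE n i (tens (bas t) y) =
          vadd (tens (lin (E1 n i) (bas t)) (diagop (dLW n i) y)) (tens (bas t) (opE n i y))" for t
      using base[OF assms(2)] by simp
  qed
qed

lemma opF_tens:
  assumes "fin x" "fin y"
  shows "opF n i (tens x y) =
         vadd (tens (diagop (dNV n i) x) (opF n i y)) (tens (lin (F1 n i) x) y)"
proof -
  have base: "opF n i (tens (bas t) y) =
         vadd (tens (diagop (dNV n i) (bas t)) (opF n i y)) (tens (F1 n i t) y)"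
    if "fin y" for t y
  proof (rule flin_ext[of "\<lambda>y. opF n i (tens (bas t) y)"
       "\<lambda>y. vadd (tens (diagop (dNV n i) (bas t)) (opF n i y)) (tens (F1 n i t) y)", OF _ _ _ that])
    show "flin (\<lambda>y. opF n i (tens (bas t) y))" unfolding opF_def
      by (intro flin_intros pfin_intros; simp)
    show "flin (\<lambda>y. vadd (tens (diagop (dNV n i) (bas t)) (opF n i y)) (tens (F1 n i t) y))"
      unfolding opF_def by (intro flin_intros pfin_intros; simp)
    show "opF n i (tens (bas t) (bas w)) =
          vadd (tens (diagop (dNV n i) (bas t)) (opF n i (bas w))) (tens (F1 n i t) (bas w))" for w
      by (simp add: opF_def FB_Cons' del: FB.simps(2))
  qed
  show ?thesis
  proof (rule flin_ext[of "\<lambda>x. opF n i (tens x y)"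
       "\<lambda>x. vadd (tens (diagop (dNV n i) x) (opF n i y)) (tens (lin (F1 n i) x) y)", OF _ _ _ assms(1)])
    show "flin (\<lambda>x. opF n i (tens x y))" unfolding opF_def
      using assms(2) by (intro flin_intros pfin_intros; simp)
    show "flin (\<lambda>x. vadd (tens (diagop (dNV n i) x) (opF n i y)) (tens (lin (F1 n i) x) y))"
      using assms(2) by (intro flin_intros pfin_intros; simp)
    show "opF n i (tens (bas t) y) =
          vadd (tens (diagop (dNV n i) (bas t)) (opF n i y)) (tens (lin (F1 n i) (bas t)) y)" for t
      using base[OF assms(2)] by simp
  qed
qed


lemma mod_plus_small:
  fixes x c m :: int
  assumes m: "0 < m" and c: "\<bar>c\<bar> \<le> m"
  shows "(x + c) mod m = (if x mod m + c < 0 then x mod m + c + m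
                          else if m \<le> x mod m + c then x mod m + c - m else x mod m + c)"
proof -
  have r: "0 \<le> x mod m" "x mod m < m" using m by simp_all
  have e: "(x + c) mod m = (x mod m + c) mod m" by (simp add: mod_add_left_eq)
  show ?thesis
  proof (cases "x mod m + c < 0")
    case True
    have "(x mod m + c) mod m = (x mod m + c + m) mod m" by simp
    also have "\<dots> = x mod m + c + m" using True r c by (intro mod_pos_pos_trivial) auto
    finally show ?thesis using e True by simp
  next
    case False
    show ?thesis
    proof (cases "m \<le> x mod m + c")
      case True
      have "(x mod m + c) mod m = (x mod m + c - m) mod m" by (simp add: mod_diff_right_eq[symmetric])
      also have "\<dots> = x mod m + c - m" using True r c by (intro mod_pos_pos_trivial) auto
      finally show ?thesis using e True False by simp
    next
      case F2: False
      then show ?thesis using e False r by (simp add: mod_pos_pos_trivial)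
    qed
  qed
qed

lemma mod_plus_small':
  fixes x c m :: int
  assumes m: "0 < m" and c: "\<bar>c\<bar> \<le> m"
  shows "(c + x) mod m = (if x mod m + c < 0 then x mod m + c + m
                          else if m \<le> x mod m + c then x mod m + c - m else x mod m + c)"
  using mod_plus_small[OF m c, of x] by (simp add: add.commute)

lemma mod_minus_small:
  fixes x c m :: int
  assumes m: "0 < m" and c: "\<bar>c\<bar> \<le> m"
  shows "(x - c) mod m = (if x mod m - c < 0 then x mod m - c + m
                          else if m \<le> x mod m - c then x mod m - c - m else x mod m - c)"
  using mod_plus_small[OF m, of "-c" x] c by simp

lemma mod_diff_vars:
  fixes x y m :: int
  assumes m: "0 < m"
  shows "(x - y) mod m = (if x mod m - y mod m < 0 then x mod m - y mod m + m else x mod m - y mod m)"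
proof -
  have r: "0 \<le> x mod m" "x mod m < m" "0 \<le> y mod m" "y mod m < m" using m by simp_all
  have e: "(x - y) mod m = (x mod m - y mod m) mod m" by (simp add: mod_diff_eq)
  show ?thesis
  proof (cases "x mod m - y mod m < 0")
    case True
    have "(x mod m - y mod m) mod m = (x mod m - y mod m + m) mod m" by simp
    also have "\<dots> = x mod m - y mod m + m" using True r(1-4) by (intro mod_pos_pos_trivial) linarith+
    finally show ?thesis using e True by simp
  next
    case False
    then show ?thesis using e r by (simp add: mod_pos_pos_trivial)
  qed
qed

lemma mod_bnd: "3 \<le> n \<Longrightarrow> 0 \<le> x mod int n \<and> x mod int n < int n"
  by simp

lemma mod_small_const: "3 \<le> n \<Longrightarrow> (1::int) mod int n = 1" "3 \<le> n \<Longrightarrow> (-1::int) mod int n = int n - 1"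
  "3 \<le> n \<Longrightarrow> (2::int) mod int n = 2" "3 \<le> n \<Longrightarrow> (-2::int) mod int n = int n - 2"
  using mod_minus_small[of "int n" 2 0] mod_minus_small[of "int n" 1 0]
  by (simp_all add: mod_pos_pos_trivial)

lemmas modsimps = cong_def mod_plus_small mod_plus_small' mod_minus_small mod_diff_vars mod_small_const


lemma cong_conflict:
  assumes n: "3 \<le> n" and h1: "[i = a] (mod int n)" and h2: "[i = b] (mod int n)"
    and d: "a - b \<in> {-2, -1, 1, 2}"
  shows False
proof -
  have "[a = b] (mod int n)" using h1 h2 by (meson cong_sym cong_trans)
  then have dv: "int n dvd (a - b)" by (simp add: cong_iff_dvd_diff)
  have "a - b \<noteq> 0" using d by auto
  then have "\<bar>int n\<bar> \<le> \<bar>a - b\<bar>" using dv by (rule dvd_imp_le_int)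
  then show False using n d by auto
qed

lemma cong_p1_iff[simp]: "[i + 1 = t] (mod m) \<longleftrightarrow> [i = t - 1] (mod (m::int))"
  by (simp add: cong_iff_dvd_diff algebra_simps)

lemma wV_cong: "[a = b] (mod int n) \<Longrightarrow> wV n k a = wV n k b"
  unfolding wV_def by (meson cong_sym cong_trans)

lemma wV_sym: "wV n a b = wV n b a"
  unfolding wV_def by (simp add: cong_sym_eq)

lemma wV_shift1[simp]: "wV n (a + 1) (b + 1) = wV n a b"
  unfolding wV_def by (simp add: cong_iff_dvd_diff)

lemma epsp_eq: assumes n: "3 \<le> n" shows "epsp n i j = wV n i j - wV n i (j + 1)"
  unfolding epsp_def wV_def using n
  by (auto simp: modsimps split: if_splits; (insert mod_bnd[OF n, of i] mod_bnd[OF n, of j], linarith))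

section \<open>Shifts\<close>

definition shiftsB :: "('a \<Rightarrow> 'a \<Rightarrow> qv) \<Rightarrow> ('a \<Rightarrow> int) \<Rightarrow> int \<Rightarrow> bool" where
  "shiftsB B d e \<longleftrightarrow> (\<forall>w u. B w u \<noteq> 0 \<longrightarrow> d u = d w + e)"

lemma shiftsB_eq: "shiftsB B d e \<Longrightarrow> e = e' \<Longrightarrow> shiftsB B d e'"
  by simp

lemma shiftsB_diff:
  "shiftsB B d1 e1 \<Longrightarrow> shiftsB B d2 e2 \<Longrightarrow> shiftsB B (\<lambda>u. d1 u - d2 u) (e1 - e2)"
  by (simp add: shiftsB_def)

lemma diag_comm:
  assumes B: "\<And>w. fin (B w)" and s: "shiftsB B d e" and z: "fin z"
  shows "diagop d (lin B z) = vscale (vv powi e) (lin B (diagop d z))"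
proof (rule flin_ext[of "\<lambda>z. diagop d (lin B z)" "\<lambda>z. vscale (vv powi e) (lin B (diagop d z))", OF _ _ _ z])
  show "flin (\<lambda>z. diagop d (lin B z))" by (intro flin_intros pfin_intros)
  show "flin (\<lambda>z. vscale (vv powi e) (lin B (diagop d z)))" by (intro flin_intros pfin_intros)
  show "diagop d (lin B (bas w)) = vscale (vv powi e) (lin B (diagop d (bas w)))" for w
  proof
    fix u
    show "diagop d (lin B (bas w)) u = vscale (vv powi e) (lin B (diagop d (bas w))) u"
    proof (cases "B w u = 0")
      case True
      have "lin B (diagop d (bas w)) = vscale (vv powi d w) (B w)" by (simp add: diagop_bas lin_vscale)
      then show ?thesis using True by (simp add: diagop_def vscale_def)
    next
      case False
      then have "d u = d w + e" using s by (simp add: shiftsB_def)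
      moreover have "lin B (diagop d (bas w)) = vscale (vv powi d w) (B w)" by (simp add: diagop_bas lin_vscale)
      ultimately show ?thesis by (simp add: diagop_def vscale_def power_int_add mult_ac)
    qed
  qed
qed

lemma shifts_E1: "shiftsB (E1 n j) (wV n k) (wV n k j - wV n k (j + 1))"
  unfolding shiftsB_def
proof (intro allI impI)
  fix t a assume "E1 n j t a \<noteq> 0"
  then have h: "[j = t - 1] (mod int n)" "a = t - 1" by (auto simp: E1_def bas_def split: if_splits)
  have "wV n k j = wV n k (t - 1)" using h(1) by (rule wV_cong)
  moreover have "wV n k (j + 1) = wV n k t" using h(1) by (intro wV_cong) simp
  ultimately show "wV n k a = wV n k t + (wV n k j - wV n k (j + 1))" using h(2) by simp
qed

lemma shifts_F1: "shiftsB (F1 n j) (wV n k) (- (wV n k j - wV n k (j + 1)))"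
  unfolding shiftsB_def
proof (intro allI impI)
  fix t a assume "F1 n j t a \<noteq> 0"
  then have h: "[j = t] (mod int n)" "a = t + 1" by (auto simp: F1_def bas_def split: if_splits)
  have "wV n k j = wV n k t" using h(1) by (rule wV_cong)
  moreover have "wV n k (j + 1) = wV n k (t + 1)" using h(1) by (intro wV_cong) (simp add: cong_iff_dvd_diff)
  ultimately show "wV n k a = wV n k t + - (wV n k j - wV n k (j + 1))" using h(2) by simp
qed

lemma shifts_EB: "shiftsB (EB n j) (wW n k) (wV n k j - wV n k (j + 1))"
  unfolding shiftsB_def
proof (rule allI)
  fix w show "\<forall>u. EB n j w u \<noteq> 0 \<longrightarrow> wW n k u = wW n k w + (wV n k j - wV n k (j + 1))"
  proof (induction w)
    case Nil then show ?case by simp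
  next
    case (Cons t w)
    show ?case
    proof (intro allI impI)
      fix u assume u: "EB n j (t # w) u \<noteq> 0"
      then obtain a u' where uu: "u = a # u'" by (cases u) (auto simp: EB_Cons' vadd_def simp del: EB.simps(2))
      from u have "E1 n j t a * diagop (dLW n j) (bas w) u' + bas t a * EB n j w u' \<noteq> 0"
        by (simp add: EB_Cons' vadd_def uu del: EB.simps(2))
      then consider "E1 n j t a \<noteq> 0" "diagop (dLW n j) (bas w) u' \<noteq> 0" | "bas t a \<noteq> 0" "EB n j w u' \<noteq> 0"
        by fastforce
      then show "wW n k u = wW n k (t # w) + (wV n k j - wV n k (j + 1))"
      proof cases
        case 1
        then have "u' = w" by (simp add: diagop_def bas_def split: if_splits)
        moreover have "wV n k a = wV n k t + (wV n k j - wV n k (j + 1))"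
          using 1(1) shifts_E1[of n j k] by (simp add: shiftsB_def)
        ultimately show ?thesis using uu by simp
      next
        case 2
        then have "a = t" by (simp add: bas_def split: if_splits)
        then show ?thesis using uu Cons.IH 2(2) by simp
      qed
    qed
  qed
qed

lemma shifts_FB: "shiftsB (FB n j) (wW n k) (- (wV n k j - wV n k (j + 1)))"
  unfolding shiftsB_def
proof (rule allI)
  fix w show "\<forall>u. FB n j w u \<noteq> 0 \<longrightarrow> wW n k u = wW n k w + - (wV n k j - wV n k (j + 1))"
  proof (induction w)
    case Nil then show ?case by simp
  next
    case (Cons t w)
    show ?case
    proof (intro allI impI)
      fix u assume u: "FB n j (t # w) u \<noteq> 0"
      then obtain a u' where uu: "u = a # u'" by (cases u) (auto simp: FB_Cons' vadd_def simp del: FB.simps(2))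
      from u have "diagop (dNV n j) (bas t) a * FB n j w u' + F1 n j t a * bas w u' \<noteq> 0"
        by (simp add: FB_Cons' vadd_def uu del: FB.simps(2))
      then consider "diagop (dNV n j) (bas t) a \<noteq> 0" "FB n j w u' \<noteq> 0" | "F1 n j t a \<noteq> 0" "bas w u' \<noteq> 0"
        by fastforce
      then show "wW n k u = wW n k (t # w) + - (wV n k j - wV n k (j + 1))"
      proof cases
        case 1
        then have "a = t" by (simp add: diagop_def bas_def split: if_splits)
        then show ?thesis using uu Cons.IH 1(2) by simp
      next
        case 2
        then have "u' = w" by (simp add: bas_def split: if_splits)
        moreover have "wV n k a = wV n k t + - (wV n k j - wV n k (j + 1))"
          using 2(1) shifts_F1[of n j k] by (simp add: shiftsB_def)
        ultimately show ?thesis using uu by simp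
      qed
    qed
  qed
qed

definition cartv :: "nat \<Rightarrow> int \<Rightarrow> int \<Rightarrow> int" where
  "cartv n i j = 2 * wV n i j - wV n i (j + 1) - wV n (i + 1) j"

lemma cart_calc: "(wV n i j - wV n i (j + 1)) - (wV n (i + 1) j - wV n (i + 1) (j + 1)) = cartv n i j"
  by (simp add: cartv_def)

lemma shifts_E1_L: "shiftsB (E1 n j) (dLV n i) (cartv n i j)"
proof -
  have "shiftsB (E1 n j) (\<lambda>u. wV n i u - wV n (i + 1) u)
     ((wV n i j - wV n i (j + 1)) - (wV n (i + 1) j - wV n (i + 1) (j + 1)))"
    by (intro shiftsB_diff shifts_E1)
  then show ?thesis unfolding cart_calc by (simp add: dLV_def[abs_def])
qed

lemma shifts_E1_N: "shiftsB (E1 n j) (dNV n i) (- cartv n i j)"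
proof -
  have "shiftsB (E1 n j) (\<lambda>u. wV n (i + 1) u - wV n i u)
     ((wV n (i + 1) j - wV n (i + 1) (j + 1)) - (wV n i j - wV n i (j + 1)))"
    by (intro shiftsB_diff shifts_E1)
  then show ?thesis unfolding dNV_def[abs_def] by (rule shiftsB_eq) (simp add: cartv_def)
qed

lemma shifts_F1_N: "shiftsB (F1 n j) (dNV n i) (cartv n i j)"
proof -
  have "shiftsB (F1 n j) (\<lambda>u. wV n (i + 1) u - wV n i u)
     ((- (wV n (i + 1) j - wV n (i + 1) (j + 1))) - (- (wV n i j - wV n i (j + 1))))"
    by (intro shiftsB_diff shifts_F1)
  then show ?thesis unfolding dNV_def[abs_def] by (rule shiftsB_eq) (simp add: cartv_def)
qed

lemma shifts_EB_L: "shiftsB (EB n j) (dLW n i) (cartv n i j)"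
proof -
  have "shiftsB (EB n j) (\<lambda>u. wW n i u - wW n (i + 1) u)
     ((wV n i j - wV n i (j + 1)) - (wV n (i + 1) j - wV n (i + 1) (j + 1)))"
    by (intro shiftsB_diff shifts_EB)
  then show ?thesis unfolding cart_calc by (simp add: dLW_def[abs_def])
qed

lemma shifts_FB_L: "shiftsB (FB n j) (dLW n i) (- cartv n i j)"
proof -
  have "shiftsB (FB n j) (\<lambda>u. wW n i u - wW n (i + 1) u)
     ((- (wV n i j - wV n i (j + 1))) - (- (wV n (i + 1) j - wV n (i + 1) (j + 1))))"
    by (intro shiftsB_diff shifts_FB)
  then show ?thesis unfolding dLW_def[abs_def] by (rule shiftsB_eq) (simp add: cartv_def)
qed

lemma L_E: "fin z \<Longrightarrow> diagop (dLW n i) (opE n j z) = vscale (vv powi cartv n i j) (opE n j (diagop (dLW n i) z))"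
  unfolding opE_def by (rule diag_comm[OF _ shifts_EB_L]) simp_all
lemma L_F: "fin z \<Longrightarrow> diagop (dLW n i) (opF n j z) = vscale (vv powi (- cartv n i j)) (opF n j (diagop (dLW n i) z))"
  unfolding opF_def by (rule diag_comm[OF _ shifts_FB_L]) simp_all
lemma N_E1: "fin z \<Longrightarrow> diagop (dNV n i) (lin (E1 n j) z) = vscale (vv powi (- cartv n i j)) (lin (E1 n j) (diagop (dNV n i) z))"
  by (rule diag_comm[OF _ shifts_E1_N]) simp_all
lemma N_F1: "fin z \<Longrightarrow> diagop (dNV n i) (lin (F1 n j) z) = vscale (vv powi cartv n i j) (lin (F1 n j) (diagop (dNV n i) z))"
  by (rule diag_comm[OF _ shifts_F1_N]) simp_all

lemma cart_sym: "cartv n i j = cartv n j i"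
  unfolding cartv_def using wV_sym[of n i j] wV_sym[of n i "j+1"] wV_sym[of n "i+1" j] by simp

lemma cart_same: assumes n: "3 \<le> n" shows "cartv n i i = 2"
  unfolding cartv_def wV_def using n
  by (auto simp: modsimps split: if_splits; (insert mod_bnd[OF n, of i] mod_bnd[OF n, of j], linarith))

lemma cart_adj: assumes n: "3 \<le> n" shows "adjacent n i j \<Longrightarrow> cartv n i j = -1"
  unfolding cartv_def wV_def adjacent_def using n
  by (auto simp: modsimps split: if_splits; (insert mod_bnd[OF n, of i] mod_bnd[OF n, of j], linarith))

lemma cart_nonadj: assumes n: "3 \<le> n" shows "\<not> adjacent n i j \<Longrightarrow> \<not> [i = j] (mod int n) \<Longrightarrow> cartv n i j = 0"
  unfolding cartv_def wV_def adjacent_def using n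
  by (auto simp: modsimps split: if_splits; (insert mod_bnd[OF n, of i] mod_bnd[OF n, of j], linarith))


lemma E1_bas: "lin (E1 n i) (bas t) = (if [i = t - 1] (mod int n) then bas (t - 1) else (\<lambda>_. 0))"
  by (simp add: E1_def)
lemma F1_bas: "lin (F1 n i) (bas t) = (if [i = t] (mod int n) then bas (t + 1) else (\<lambda>_. 0))"
  by (simp add: F1_def)

lemma vv_ne_inv[simp]: "vv \<noteq> inverse vv" "inverse vv \<noteq> vv"
  using vv_diff_nz by auto

lemma vv_nz2[simp]: "vv * vv - 1 \<noteq> 0" "vv * (vv * vv) - vv \<noteq> 0" "vv * vv \<noteq> 1"
proof -
  show a: "vv * vv - 1 \<noteq> 0" using vv_sq by simp
  show "vv * vv \<noteq> 1" using vv_sq by simp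
  have "vv * (vv * vv) - vv = vv * (vv * vv - 1)" by (simp add: algebra_simps)
  then show "vv * (vv * vv) - vv \<noteq> 0" using a by simp
qed

lemma list_fun_eq: "f [] = g [] \<Longrightarrow> (\<And>a u. f (a # u) = g (a # u)) \<Longrightarrow> f = g"
  by (rule ext, case_tac x) auto

locale nn =
  fixes n :: nat
  assumes n: "3 \<le> n"
begin

lemma VE1: assumes x: "fin x"
  shows "lin (E1 n i) (lin (E1 n i) x) = (\<lambda>_. 0)"
proof (rule flin_ext[of "\<lambda>x. lin (E1 n i) (lin (E1 n i) x)" "\<lambda>x. (\<lambda>_. 0)", OF _ _ _ x])
  show "flin (\<lambda>x. lin (E1 n i) (lin (E1 n i) x))" by (intro flin_intros pfin_intros; simp)
  show "flin (\<lambda>x. (\<lambda>_. 0))" by (intro flin_intros pfin_intros; simp)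
  fix t show "lin (E1 n i) (lin (E1 n i) (bas t)) = (\<lambda>_. 0)"
    using n  apply (simp add: E1_def F1_def)
    apply (auto simp: modsimps split: if_splits;
     (insert mod_bnd[OF n, of i] mod_bnd[OF n, of t], rule ccontr, linarith))
    done
qed

lemma VE2: assumes x: "fin x"
  shows "lin (E1 n i) (lin (E1 n j) (lin (E1 n i) x)) = (\<lambda>_. 0)"
proof (rule flin_ext[of "\<lambda>x. lin (E1 n i) (lin (E1 n j) (lin (E1 n i) x))" "\<lambda>x. (\<lambda>_. 0)", OF _ _ _ x])
  show "flin (\<lambda>x. lin (E1 n i) (lin (E1 n j) (lin (E1 n i) x)))" by (intro flin_intros pfin_intros; simp)
  show "flin (\<lambda>x. (\<lambda>_. 0))" by (intro flin_intros pfin_intros; simp)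
  fix t show "lin (E1 n i) (lin (E1 n j) (lin (E1 n i) (bas t))) = (\<lambda>_. 0)"
    using n  apply (simp add: E1_def F1_def)
    apply (auto simp: modsimps split: if_splits;
     (insert mod_bnd[OF n, of i] mod_bnd[OF n, of j] mod_bnd[OF n, of t], rule ccontr, linarith))
    done
qed

lemma VE3: assumes na: "\<not> adjacent n i j" and x: "fin x"
  shows "lin (E1 n i) (lin (E1 n j) x) = (\<lambda>_. 0)"
proof (rule flin_ext[of "\<lambda>x. lin (E1 n i) (lin (E1 n j) x)" "\<lambda>x. (\<lambda>_. 0)", OF _ _ _ x])
  show "flin (\<lambda>x. lin (E1 n i) (lin (E1 n j) x))" by (intro flin_intros pfin_intros; simp)
  show "flin (\<lambda>x. (\<lambda>_. 0))" by (intro flin_intros pfin_intros; simp)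
  fix t show "lin (E1 n i) (lin (E1 n j) (bas t)) = (\<lambda>_. 0)"
    using n na[unfolded adjacent_def] apply (simp add: E1_def F1_def adjacent_def)
    apply (auto simp: modsimps split: if_splits;
     (insert mod_bnd[OF n, of i] mod_bnd[OF n, of j] mod_bnd[OF n, of t], rule ccontr, linarith))
    done
qed

lemma VF1: assumes x: "fin x"
  shows "lin (F1 n i) (lin (F1 n i) x) = (\<lambda>_. 0)"
proof (rule flin_ext[of "\<lambda>x. lin (F1 n i) (lin (F1 n i) x)" "\<lambda>x. (\<lambda>_. 0)", OF _ _ _ x])
  show "flin (\<lambda>x. lin (F1 n i) (lin (F1 n i) x))" by (intro flin_intros pfin_intros; simp)
  show "flin (\<lambda>x. (\<lambda>_. 0))" by (intro flin_intros pfin_intros; simp)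
  fix t show "lin (F1 n i) (lin (F1 n i) (bas t)) = (\<lambda>_. 0)"
    using n  apply (simp add: E1_def F1_def)
    apply (auto simp: modsimps split: if_splits;
     (insert mod_bnd[OF n, of i] mod_bnd[OF n, of t], rule ccontr, linarith))
    done
qed

lemma VF2: assumes x: "fin x"
  shows "lin (F1 n i) (lin (F1 n j) (lin (F1 n i) x)) = (\<lambda>_. 0)"
proof (rule flin_ext[of "\<lambda>x. lin (F1 n i) (lin (F1 n j) (lin (F1 n i) x))" "\<lambda>x. (\<lambda>_. 0)", OF _ _ _ x])
  show "flin (\<lambda>x. lin (F1 n i) (lin (F1 n j) (lin (F1 n i) x)))" by (intro flin_intros pfin_intros; simp)
  show "flin (\<lambda>x. (\<lambda>_. 0))" by (intro flin_intros pfin_intros; simp)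
  fix t show "lin (F1 n i) (lin (F1 n j) (lin (F1 n i) (bas t))) = (\<lambda>_. 0)"
    using n  apply (simp add: E1_def F1_def)
    apply (auto simp: modsimps split: if_splits;
     (insert mod_bnd[OF n, of i] mod_bnd[OF n, of j] mod_bnd[OF n, of t], rule ccontr, linarith))
    done
qed

lemma VF3: assumes na: "\<not> adjacent n i j" and x: "fin x"
  shows "lin (F1 n i) (lin (F1 n j) x) = (\<lambda>_. 0)"
proof (rule flin_ext[of "\<lambda>x. lin (F1 n i) (lin (F1 n j) x)" "\<lambda>x. (\<lambda>_. 0)", OF _ _ _ x])
  show "flin (\<lambda>x. lin (F1 n i) (lin (F1 n j) x))" by (intro flin_intros pfin_intros; simp)
  show "flin (\<lambda>x. (\<lambda>_. 0))" by (intro flin_intros pfin_intros; simp)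
  fix t show "lin (F1 n i) (lin (F1 n j) (bas t)) = (\<lambda>_. 0)"
    using n na[unfolded adjacent_def] apply (simp add: E1_def F1_def adjacent_def)
    apply (auto simp: modsimps split: if_splits;
     (insert mod_bnd[OF n, of i] mod_bnd[OF n, of j] mod_bnd[OF n, of t], rule ccontr, linarith))
    done
qed

lemma VQ5b1: assumes ne: "\<not> [i = j] (mod int n)" and x: "fin x"
  shows "lin (E1 n i) (lin (F1 n j) x) = (\<lambda>_. 0)"
proof (rule flin_ext[of "\<lambda>x. lin (E1 n i) (lin (F1 n j) x)" "\<lambda>x. (\<lambda>_. 0)", OF _ _ _ x])
  show "flin (\<lambda>x. lin (E1 n i) (lin (F1 n j) x))" by (intro flin_intros pfin_intros; simp)
  show "flin (\<lambda>x. (\<lambda>_. 0))" by (intro flin_intros pfin_intros; simp)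
  fix t show "lin (E1 n i) (lin (F1 n j) (bas t)) = (\<lambda>_. 0)"
    using n ne apply (simp add: E1_def F1_def)
    apply (auto simp: modsimps split: if_splits;
     (insert mod_bnd[OF n, of i] mod_bnd[OF n, of j] mod_bnd[OF n, of t], rule ccontr, linarith))
    done
qed

lemma VQ5b2: assumes ne: "\<not> [i = j] (mod int n)" and x: "fin x"
  shows "lin (F1 n j) (lin (E1 n i) x) = (\<lambda>_. 0)"
proof (rule flin_ext[of "\<lambda>x. lin (F1 n j) (lin (E1 n i) x)" "\<lambda>x. (\<lambda>_. 0)", OF _ _ _ x])
  show "flin (\<lambda>x. lin (F1 n j) (lin (E1 n i) x))" by (intro flin_intros pfin_intros; simp)
  show "flin (\<lambda>x. (\<lambda>_. 0))" by (intro flin_intros pfin_intros; simp)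
  fix t show "lin (F1 n j) (lin (E1 n i) (bas t)) = (\<lambda>_. 0)"
    using n ne apply (simp add: E1_def F1_def)
    apply (auto simp: modsimps split: if_splits;
     (insert mod_bnd[OF n, of i] mod_bnd[OF n, of j] mod_bnd[OF n, of t], rule ccontr, linarith))
    done
qed

lemma VQ5a: assumes x: "fin x"
  shows "lin (E1 n i) (lin (F1 n i) x) = vadd (lin (F1 n i) (lin (E1 n i) x))
     (vscale (inverse (vv - inverse vv)) (vsub (diagop (dLV n i) x) (diagop (dNV n i) x)))"
proof (rule flin_ext[of "\<lambda>x. lin (E1 n i) (lin (F1 n i) x)" "\<lambda>x. vadd (lin (F1 n i) (lin (E1 n i) x))
     (vscale (inverse (vv - inverse vv)) (vsub (diagop (dLV n i) x) (diagop (dNV n i) x)))", OF _ _ _ x])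
  show "flin (\<lambda>x. lin (E1 n i) (lin (F1 n i) x))" by (intro flin_intros pfin_intros; simp)
  show "flin (\<lambda>x. vadd (lin (F1 n i) (lin (E1 n i) x))
     (vscale (inverse (vv - inverse vv)) (vsub (diagop (dLV n i) x) (diagop (dNV n i) x))))"
    by (intro flin_intros pfin_intros; simp)
  fix t
  have ex: "[i = t] (mod int n) \<Longrightarrow> [i = t - 1] (mod int n) \<Longrightarrow> False"
    using n apply (auto simp: modsimps split: if_splits;
     (insert mod_bnd[OF n, of i] mod_bnd[OF n, of t], rule ccontr, linarith))
    done
  have vi: "vv - inverse vv \<noteq> 0" by simp
  show "lin (E1 n i) (lin (F1 n i) (bas t)) = vadd (lin (F1 n i) (lin (E1 n i) (bas t)))
     (vscale (inverse (vv - inverse vv)) (vsub (diagop (dLV n i) (bas t)) (diagop (dNV n i) (bas t))))"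
  proof (cases "[i = t] (mod int n)")
    case True
    then have F: "\<not> [i = t - 1] (mod int n)" using ex by blast
    show ?thesis
      apply (simp add: E1_def F1_def True F dLV_def dNV_def wV_def diagop_bas)
        apply (rule ext)
        apply (simp add: vadd_def vsub_def vscale_def field_simps vi)
        done
  next
    case False
    show ?thesis
    proof (cases "[i = t - 1] (mod int n)")
      case T2: True
      show ?thesis
        apply (simp add: E1_def F1_def T2 False dLV_def dNV_def wV_def diagop_bas)
        apply (rule ext)
        apply (simp add: vadd_def vsub_def vscale_def field_simps vi)
        done
    next
      case F2: False
      show ?thesis
        apply (simp add: E1_def F1_def F2 False dLV_def dNV_def wV_def diagop_bas)
        apply (rule ext)
        apply (simp add: vadd_def vsub_def vscale_def)
        done
    qed
  qed
qed

end


definition dNW :: "nat \<Rightarrow> int \<Rightarrow> int list \<Rightarrow> int" where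
  "dNW n i u = - dLW n i u"

lemma dLW_Cons[simp]: "dLW n i (a # u) = dLV n i a + dLW n i u"
  by (simp add: dLW_def dLV_def)
lemma dNV_eq: "dNV n i a = - dLV n i a"
  by (simp add: dNV_def dLV_def)

abbreviation cc :: qv where "cc \<equiv> inverse (vv - inverse vv)"

context nn begin

lemma QA_step:
  assumes x: "fin x" and y: "fin y"
  and IH: "opE n i (opF n i y) = vadd (opF n i (opE n i y))
             (vscale cc (vsub (diagop (dLW n i) y) (diagop (dNW n i) y)))"
  shows "opE n i (opF n i (tens x y)) = vadd (opF n i (opE n i (tens x y)))
             (vscale cc (vsub (diagop (dLW n i) (tens x y)) (diagop (dNW n i) (tens x y))))"
  using x y
  apply (simp add: opE_tens opF_tens tens_vaddL tens_vaddR tens_vscaleL tens_vscaleR lin_vadd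
      lin_vscale lin_vsub L_F N_E1 IH VQ5a cart_same[OF n] diagop_vadd diagop_vsub diagop_vscale)
  apply (rule list_fun_eq)
   apply (simp add: vadd_def vsub_def vscale_def diagop_def)
  apply (simp add: vadd_def vsub_def vscale_def diagop_def dNW_def dNV_eq power_int_add
      power_int_minus)
  apply (simp add: algebra_simps)
  done


lemma adjacent_sym: "adjacent n i j \<Longrightarrow> adjacent n j i"
  unfolding adjacent_def
  by (metis cong_minus_minus_iff minus_diff_eq)

lemma QB_step:
  assumes x: "fin x" and y: "fin y" and ne: "\<not> [i = j] (mod int n)"
  and IH: "opE n i (opF n j y) = opF n j (opE n i y)"
  shows "opE n i (opF n j (tens x y)) = opF n j (opE n i (tens x y))"
  using x y
  apply (simp add: opE_tens opF_tens tens_vaddL tens_vaddR tens_vscaleL tens_vscaleR lin_vadd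
      lin_vscale lin_vsub L_F N_E1 IH VQ5b1[OF ne] VQ5b2[OF ne] diagop_vadd diagop_vsub diagop_vscale)
  apply (rule list_fun_eq)
   apply (simp add: vadd_def vsub_def vscale_def diagop_def)
  apply (simp add: vadd_def vsub_def vscale_def diagop_def cart_sym[of n j i] algebra_simps)
  done

lemma CE_step:
  assumes x: "fin x" and y: "fin y" and na: "\<not> adjacent n i j" and ne: "\<not> [i = j] (mod int n)"
  and IH: "opE n i (opE n j y) = opE n j (opE n i y)"
  shows "opE n i (opE n j (tens x y)) = opE n j (opE n i (tens x y))"
proof -
  have na': "\<not> adjacent n j i" using na adjacent_sym by blast
  have ne': "\<not> [j = i] (mod int n)" using ne by (simp add: cong_sym_eq)
  have sw: "diagop (dLW n j) (diagop (dLW n i) z) = diagop (dLW n i) (diagop (dLW n j) z)" for z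
    by (simp add: diagop_def fun_eq_iff mult_ac)
  show ?thesis
  using x y
  apply (simp add: opE_tens tens_vaddL tens_vaddR tens_vscaleL tens_vscaleR lin_vadd
      lin_vscale lin_vsub L_E IH VE3[OF na] VE3[OF na'] diagop_vadd diagop_vsub diagop_vscale
      cart_nonadj[OF n na ne] cart_nonadj[OF n na' ne'] sw)
  apply (rule list_fun_eq)
   apply (simp add: vadd_def vsub_def vscale_def diagop_def)
  apply (simp add: vadd_def vsub_def vscale_def diagop_def algebra_simps)
  done
qed

lemma CF_step:
  assumes x: "fin x" and y: "fin y" and na: "\<not> adjacent n i j" and ne: "\<not> [i = j] (mod int n)"
  and IH: "opF n i (opF n j y) = opF n j (opF n i y)"
  shows "opF n i (opF n j (tens x y)) = opF n j (opF n i (tens x y))"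
proof -
  have na': "\<not> adjacent n j i" using na adjacent_sym by blast
  have ne': "\<not> [j = i] (mod int n)" using ne by (simp add: cong_sym_eq)
  have sw: "diagop (dNV n j) (diagop (dNV n i) z) = diagop (dNV n i) (diagop (dNV n j) z)" for z
    by (simp add: diagop_def fun_eq_iff mult_ac)
  show ?thesis
  using x y
  apply (simp add: opF_tens tens_vaddL tens_vaddR tens_vscaleL tens_vscaleR lin_vadd
      lin_vscale lin_vsub N_F1 IH VF3[OF na] VF3[OF na'] diagop_vadd diagop_vsub diagop_vscale
      cart_nonadj[OF n na ne] cart_nonadj[OF n na' ne'] sw)
  apply (rule list_fun_eq)
   apply (simp add: vadd_def vsub_def vscale_def diagop_def)
  apply (simp add: vadd_def vsub_def vscale_def diagop_def algebra_simps)
  done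
qed


lemma vv_inv: "vv * inverse vv = 1" by simp

lemma serre_rw:
  assumes "vadd (vsub a (vscale c b)) d = (\<lambda>_. 0)"
  shows "d = vsub (vscale c b) a"
proof (rule ext)
  fix u
  from fun_cong[OF assms, of u] have "a u - c * b u + d u = 0" by (simp add: vadd_def vsub_def vscale_def)
  then show "d u = vsub (vscale c b) a u" unfolding vsub_def vscale_def by algebra
qed

lemma SE_step:
  assumes x: "fin x" and y: "fin y" and adj: "adjacent n i j"
  and IH: "vadd (vsub (opE n i (opE n i (opE n j y))) (vscale (vv + inverse vv) (opE n i (opE n j (opE n i y)))))
            (opE n j (opE n i (opE n i y))) = (\<lambda>_. 0)"
  shows "vadd (vsub (opE n i (opE n i (opE n j (tens x y)))) (vscale (vv + inverse vv) (opE n i (opE n j (opE n i (tens x y))))))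
            (opE n j (opE n i (opE n i (tens x y)))) = (\<lambda>_. 0)"
proof -
  have adj': "adjacent n j i" using adj adjacent_sym by blast
  have IH': "opE n j (opE n i (opE n i y)) = vsub (vscale (vv + inverse vv) (opE n i (opE n j (opE n i y)))) (opE n i (opE n i (opE n j y)))"
    using IH by (rule serre_rw)
  have sw: "diagop (dLW n j) (diagop (dLW n i) z) = diagop (dLW n i) (diagop (dLW n j) z)" for z
    by (simp add: diagop_def fun_eq_iff mult_ac)
  show ?thesis
  using x y
  apply (simp add: opE_tens tens_vaddL tens_vaddR tens_vscaleL tens_vscaleR lin_vadd
      lin_vscale lin_vsub L_E IH' VE1 VE2 diagop_vadd diagop_vsub diagop_vscale
      cart_same[OF n] cart_adj[OF n adj] cart_adj[OF n adj'] sw)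
  apply (rule list_fun_eq)
   apply (simp add: vadd_def vsub_def vscale_def diagop_def)
  apply (simp add: vadd_def vsub_def vscale_def diagop_def power_int_minus)
  using vv_inv apply algebra
  done
qed

lemma SF_step:
  assumes x: "fin x" and y: "fin y" and adj: "adjacent n i j"
  and IH: "vadd (vsub (opF n i (opF n i (opF n j y))) (vscale (vv + inverse vv) (opF n i (opF n j (opF n i y)))))
            (opF n j (opF n i (opF n i y))) = (\<lambda>_. 0)"
  shows "vadd (vsub (opF n i (opF n i (opF n j (tens x y)))) (vscale (vv + inverse vv) (opF n i (opF n j (opF n i (tens x y))))))
            (opF n j (opF n i (opF n i (tens x y)))) = (\<lambda>_. 0)"
proof -
  have adj': "adjacent n j i" using adj adjacent_sym by blast
  have IH': "opF n j (opF n i (opF n i y)) = vsub (vscale (vv + inverse vv) (opF n i (opF n j (opF n i y)))) (opF n i (opF n i (opF n j y)))"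
    using IH by (rule serre_rw)
  have sw: "diagop (dNV n j) (diagop (dNV n i) z) = diagop (dNV n i) (diagop (dNV n j) z)" for z
    by (simp add: diagop_def fun_eq_iff mult_ac)
  show ?thesis
  using x y
  apply (simp add: opF_tens tens_vaddL tens_vaddR tens_vscaleL tens_vscaleR lin_vadd
      lin_vscale lin_vsub N_F1 IH' VF1 VF2 diagop_vadd diagop_vsub diagop_vscale
      cart_same[OF n] cart_adj[OF n adj] cart_adj[OF n adj'] sw)
  apply (rule list_fun_eq)
   apply (simp add: vadd_def vsub_def vscale_def diagop_def)
  apply (simp add: vadd_def vsub_def vscale_def diagop_def power_int_minus)
  using vv_inv apply algebra
  done
qed

end


lemma W_ind:
  fixes P Q :: "vec \<Rightarrow> vec"
  assumes P: "flin P" and Q: "flin Q" and base: "P (bas []) = Q (bas [])"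
  and step: "\<And>(x :: int \<Rightarrow> qv) y. fin x \<Longrightarrow> fin y \<Longrightarrow> P y = Q y \<Longrightarrow> P (tens x y) = Q (tens x y)"
  and f: "fin f"
  shows "P f = Q f"
proof (rule flin_ext[OF P Q _ f])
  fix w show "P (bas w) = Q (bas w)"
  proof (induction w)
    case Nil show ?case by (rule base)
  next
    case (Cons t w)
    have "P (tens (bas t) (bas w)) = Q (tens (bas t) (bas w))" by (rule step) (simp_all add: Cons.IH)
    then show ?case by simp
  qed
qed

context nn begin

lemma W_QA: "fin f \<Longrightarrow> opE n i (opF n i f) = vadd (opF n i (opE n i f))
             (vscale cc (vsub (diagop (dLW n i) f) (diagop (dNW n i) f)))"
  apply (rule W_ind[of "\<lambda>f. opE n i (opF n i f)" "\<lambda>f. vadd (opF n i (opE n i f))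
             (vscale cc (vsub (diagop (dLW n i) f) (diagop (dNW n i) f)))"])
      apply (unfold opE_def opF_def; intro flin_intros pfin_intros; simp)
     apply (unfold opE_def opF_def; intro flin_intros pfin_intros; simp)
    apply (simp add: opE_def opF_def diagop_bas dLW_def dNW_def)
    apply (rule ext, simp add: vadd_def vsub_def vscale_def)
   apply (rule QA_step; assumption)
  apply assumption
  done

lemma W_QB: "fin f \<Longrightarrow> \<not> [i = j] (mod int n) \<Longrightarrow> opE n i (opF n j f) = opF n j (opE n i f)"
  apply (rule W_ind[of "\<lambda>f. opE n i (opF n j f)" "\<lambda>f. opF n j (opE n i f)"])
      apply (unfold opE_def opF_def; intro flin_intros pfin_intros; simp)
     apply (unfold opE_def opF_def; intro flin_intros pfin_intros; simp)
    apply (simp add: opE_def opF_def)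
   apply (rule QB_step; assumption)
  apply assumption
  done

lemma W_CE: "fin f \<Longrightarrow> \<not> adjacent n i j \<Longrightarrow> \<not> [i = j] (mod int n) \<Longrightarrow> opE n i (opE n j f) = opE n j (opE n i f)"
  apply (rule W_ind[of "\<lambda>f. opE n i (opE n j f)" "\<lambda>f. opE n j (opE n i f)"])
      apply (unfold opE_def opF_def; intro flin_intros pfin_intros; simp)
     apply (unfold opE_def opF_def; intro flin_intros pfin_intros; simp)
    apply (simp add: opE_def opF_def)
   apply (rule CE_step; assumption)
  apply assumption
  done

lemma W_CF: "fin f \<Longrightarrow> \<not> adjacent n i j \<Longrightarrow> \<not> [i = j] (mod int n) \<Longrightarrow> opF n i (opF n j f) = opF n j (opF n i f)"
  apply (rule W_ind[of "\<lambda>f. opF n i (opF n j f)" "\<lambda>f. opF n j (opF n i f)"])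
      apply (unfold opE_def opF_def; intro flin_intros pfin_intros; simp)
     apply (unfold opE_def opF_def; intro flin_intros pfin_intros; simp)
    apply (simp add: opE_def opF_def)
   apply (rule CF_step; assumption)
  apply assumption
  done

lemma W_SE: "fin f \<Longrightarrow> adjacent n i j \<Longrightarrow>
  vadd (vsub (opE n i (opE n i (opE n j f))) (vscale (vv + inverse vv) (opE n i (opE n j (opE n i f)))))
            (opE n j (opE n i (opE n i f))) = (\<lambda>_. 0)"
  apply (rule W_ind[of "\<lambda>f. vadd (vsub (opE n i (opE n i (opE n j f))) (vscale (vv + inverse vv) (opE n i (opE n j (opE n i f)))))
            (opE n j (opE n i (opE n i f)))" "\<lambda>f u. 0"])
      apply (unfold opE_def opF_def; intro flin_intros pfin_intros; simp)
     apply (intro flin_intros)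
    apply (rule ext, simp add: opE_def vadd_def vsub_def vscale_def)
   apply (rule SE_step; assumption)
  apply assumption
  done

lemma W_SF: "fin f \<Longrightarrow> adjacent n i j \<Longrightarrow>
  vadd (vsub (opF n i (opF n i (opF n j f))) (vscale (vv + inverse vv) (opF n i (opF n j (opF n i f)))))
            (opF n j (opF n i (opF n i f))) = (\<lambda>_. 0)"
  apply (rule W_ind[of "\<lambda>f. vadd (vsub (opF n i (opF n i (opF n j f))) (vscale (vv + inverse vv) (opF n i (opF n j (opF n i f)))))
            (opF n j (opF n i (opF n i f)))" "\<lambda>f u. 0"])
      apply (unfold opE_def opF_def; intro flin_intros pfin_intros; simp)
     apply (intro flin_intros)
    apply (rule ext, simp add: opF_def vadd_def vsub_def vscale_def)
   apply (rule SF_step; assumption)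
  apply assumption
  done

end


lemma Vr_fin: "f \<in> Vr r \<Longrightarrow> fin f" by (simp add: Vr_def fin_def)
lemma Vr_len: "f \<in> Vr r \<Longrightarrow> f u \<noteq> 0 \<Longrightarrow> length u = r" by (simp add: Vr_def)

lemma opprod_Nil[simp]: "opprod [] f = f" by (simp add: opprod_def)
lemma opprod_Cons[simp]: "opprod (a # ops) f = a (opprod ops f)" by (simp add: opprod_def)

lemma fin_mult: "fin f \<Longrightarrow> fin (\<lambda>u. c u * f u)"
  unfolding fin_def by (rule finite_subset[of _ "{w. f w \<noteq> 0}"]) auto

lemma prodK: "fin f \<Longrightarrow> opprod (map (opK n) ks) f = (\<lambda>u. vv powi (sum_list (map (\<lambda>k. wW n k u) ks)) * f u)"
proof (induction ks)
  case Nil then show ?case by simp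
next
  case (Cons k ks)
  have fn: "fin (\<lambda>u. vv powi (sum_list (map (\<lambda>k. wW n k u) ks)) * f u)" using Cons.prems by (rule fin_mult)
  have "opprod (map (opK n) (k # ks)) f = opK n k (\<lambda>u. vv powi (sum_list (map (\<lambda>k. wW n k u) ks)) * f u)"
    by (simp add: Cons.IH[OF Cons.prems])
  also have "\<dots> = diagop (wW n k) (\<lambda>u. vv powi (sum_list (map (\<lambda>k. wW n k u) ks)) * f u)"
    by (rule opK_eq[OF fn])
  also have "\<dots> = (\<lambda>u. vv powi (sum_list (map (\<lambda>k. wW n k u) (k # ks))) * f u)"
    by (simp add: diagop_def fun_eq_iff power_int_add)
  finally show ?case .
qed

lemma prodE2: "fin f \<Longrightarrow> opprod (map (\<lambda>j g. vsub (opK n i g) (vscale (vv ^ j) g)) js) f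
    = (\<lambda>u. prod_list (map (\<lambda>j. vv powi wW n i u - vv ^ j) js) * f u)"
proof (induction js)
  case Nil then show ?case by simp
next
  case (Cons j js)
  have fn: "fin (\<lambda>u. prod_list (map (\<lambda>j. vv powi wW n i u - vv ^ j) js) * f u)" using Cons.prems by (rule fin_mult)
  have "opprod (map (\<lambda>j g. vsub (opK n i g) (vscale (vv ^ j) g)) (j # js)) f =
     vsub (opK n i (\<lambda>u. prod_list (map (\<lambda>j. vv powi wW n i u - vv ^ j) js) * f u))
       (vscale (vv ^ j) (\<lambda>u. prod_list (map (\<lambda>j. vv powi wW n i u - vv ^ j) js) * f u))"
    by (simp add: Cons.IH[OF Cons.prems])
  also have "\<dots> = vsub (diagop (wW n i) (\<lambda>u. prod_list (map (\<lambda>j. vv powi wW n i u - vv ^ j) js) * f u))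
       (vscale (vv ^ j) (\<lambda>u. prod_list (map (\<lambda>j. vv powi wW n i u - vv ^ j) js) * f u))"
    by (simp only: opK_eq[OF fn])
  also have "\<dots> = (\<lambda>u. prod_list (map (\<lambda>j. vv powi wW n i u - vv ^ j) (j # js)) * f u)"
    by (simp add: diagop_def fun_eq_iff vsub_def vscale_def algebra_simps)
  finally show ?case .
qed

lemma sum_wV:
  assumes n: "1 \<le> n"
  shows "sum_list (map (\<lambda>k. wV n k a) [1..int n]) = 1"
proof -
  define ra where "ra = a mod int n"
  define k0 where "k0 = (if ra = 0 then int n else ra)"
  have am: "0 \<le> ra" "ra < int n" using n by (simp_all add: ra_def)
  have k0: "k0 \<in> {1..int n}" using am by (auto simp: k0_def)
  have eq: "wV n k a = (if k = k0 then 1 else 0)" if k: "k \<in> {1..int n}" for k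
  proof -
    have km: "k mod int n = (if k = int n then 0 else k)" using k by (auto simp: mod_pos_pos_trivial)
    show ?thesis unfolding wV_def cong_def km k0_def ra_def[symmetric] using k am by auto
  qed
  have "sum_list (map (\<lambda>k. wV n k a) [1..int n]) = (\<Sum>k\<in>{1..int n}. wV n k a)"
    by (simp add: sum_list_distinct_conv_sum_set)
  also have "\<dots> = (\<Sum>k\<in>{1..int n}. if k = k0 then 1 else 0)" by (rule sum.cong) (simp_all add: eq)
  also have "\<dots> = 1" using k0 by simp
  finally show ?thesis .
qed

lemma sum_wW:
  assumes n: "1 \<le> n"
  shows "sum_list (map (\<lambda>k. wW n k u) [1..int n]) = int (length u)"
proof (induction u)
  case Nil then show ?case by (simp add: sum_list_distinct_conv_sum_set)
next
  case (Cons a u)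
  have "sum_list (map (\<lambda>k. wW n k (a # u)) [1..int n]) =
        sum_list (map (\<lambda>k. wV n k a) [1..int n]) + sum_list (map (\<lambda>k. wW n k u) [1..int n])"
    by (simp add: sum_list_addf)
  then show ?case using Cons sum_wV[OF n, of a] by simp
qed

lemma noncong_range: "i \<in> {1..int n} \<Longrightarrow> j \<in> {1..int n} \<Longrightarrow> i \<noteq> j \<Longrightarrow> \<not> [i = j] (mod int n)"
proof
  assume i: "i \<in> {1..int n}" and j: "j \<in> {1..int n}" and ne: "i \<noteq> j" and c: "[i = j] (mod int n)"
  then have "int n dvd (i - j)" by (simp add: cong_iff_dvd_diff)
  then have "\<bar>int n\<bar> \<le> \<bar>i - j\<bar>" using ne by (intro dvd_imp_le_int) auto
  then show False using i j by auto
qed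

theorem proposition1p6p5:
  fixes n r :: nat
  assumes "r \<ge> 3" and "n > r"
  shows "T_extra_relations n r (Vr r) (opK n)
       \<and> T_relations n r (Vr r) (opE n) (opF n) (opK n) (opKinv n)"
proof -
  have n3: "3 \<le> n" using assms by simp
  interpret nn n by unfold_locales (rule n3)
  have extra: "T_extra_relations n r (Vr r) (opK n)"
    unfolding T_extra_relations_def
  proof (intro conjI ballI)
    fix f assume f: "f \<in> Vr r"
    show "opprod (map (opK n) [1..int n]) f = vscale (vv ^ r) f"
    proof
      fix u
      show "opprod (map (opK n) [1..int n]) f u = vscale (vv ^ r) f u"
      proof (cases "f u = 0")
        case True then show ?thesis by (simp add: prodK[OF Vr_fin[OF f]] vscale_def)
      next
        case False
        then have "length u = r" using Vr_len[OF f] by simp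
        then show ?thesis using n3 by (simp add: prodK[OF Vr_fin[OF f]] vscale_def sum_wW)
      qed
    qed
  next
    fix i f assume i: "i \<in> {1..int n}" and f: "f \<in> Vr r"
    show "opprod (map (\<lambda>j g. vsub (opK n i g) (vscale (vv ^ j) g)) [0..<r + 1]) f = (\<lambda>_. 0)"
    proof
      fix u
      show "opprod (map (\<lambda>j g. vsub (opK n i g) (vscale (vv ^ j) g)) [0..<r + 1]) f u = 0"
      proof (cases "f u = 0")
        case True then show ?thesis by (subst prodE2[OF Vr_fin[OF f]]) simp
      next
        case False
        then have len: "length u = r" using Vr_len[OF f] by simp
        define m where "m = length (filter (\<lambda>s. [i = s] (mod int n)) u)"
        have w: "wW n i u = int m" by (simp add: wW_def m_def)
        have "m \<le> r" using len unfolding m_def by (metis length_filter_le)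
        then have "m \<in> set [0..<r + 1]" by (simp del: upt_Suc)
        moreover have z: "vv powi wW n i u - vv ^ m = 0" by (simp add: w)
        ultimately have "0 \<in> set (map (\<lambda>j. vv powi wW n i u - vv ^ j) [0..<r + 1])"
          unfolding set_map by (metis image_eqI)
        then have "prod_list (map (\<lambda>j. vv powi wW n i u - vv ^ j) [0..<r + 1]) = 0"
          by (simp only: prod_list_zero_iff)
        then show ?thesis by (subst prodE2[OF Vr_fin[OF f]]) (simp only: mult_zero_left)
      qed
    qed
  qed
  have rel: "\<forall>i\<in>{1..int n}. \<forall>j\<in>{1..int n}. \<forall>f\<in>Vr r.
        opK n i (opK n j f) = opK n j (opK n i f) \<and>
        opK n i (opKinv n i f) = f \<and> opKinv n i (opK n i f) = f \<and>
        opK n i (opE n j f) = vscale (vv powi epsp n i j) (opE n j (opK n i f)) \<and>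
        opK n i (opF n j f) = vscale (vv powi (- epsp n i j)) (opF n j (opK n i f)) \<and>
        vsub (opE n i (opF n j f)) (opF n j (opE n i f)) =
          (if i = j then vscale (inverse (vv - inverse vv))
                           (vsub (opK n i (opKinv n (i + 1) f)) (opKinv n i (opK n (i + 1) f)))
           else (\<lambda>_. 0)) \<and>
        (\<not> adjacent n i j \<longrightarrow> opE n i (opE n j f) = opE n j (opE n i f) \<and> opF n i (opF n j f) = opF n j (opF n i f)) \<and>
        (adjacent n i j \<longrightarrow>
           vadd (vsub (opE n i (opE n i (opE n j f))) (vscale (vv + inverse vv) (opE n i (opE n j (opE n i f)))))
                (opE n j (opE n i (opE n i f))) = (\<lambda>_. 0) \<and>
           vadd (vsub (opF n i (opF n i (opF n j f))) (vscale (vv + inverse vv) (opF n i (opF n j (opF n i f)))))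
                (opF n j (opF n i (opF n i f))) = (\<lambda>_. 0))"
  proof (intro ballI)
    fix i j f assume i: "i \<in> {1..int n}" and j: "j \<in> {1..int n}" and fV: "f \<in> Vr r"
    have f: "fin f" using fV by (rule Vr_fin)
    have c1: "opK n i (opK n j f) = opK n j (opK n i f)"
      using f by (simp add: opK_eq diagop_def fun_eq_iff mult_ac)
    have c2: "opK n i (opKinv n i f) = f" "opKinv n i (opK n i f) = f"
      using f by (simp_all add: opK_eq opKinv_eq diagop_def fun_eq_iff power_int_minus)
    have c4: "opK n i (opE n j f) = vscale (vv powi epsp n i j) (opE n j (opK n i f))"
    proof -
      have "diagop (wW n i) (opE n j f) =
            vscale (vv powi (wV n i j - wV n i (j + 1))) (opE n j (diagop (wW n i) f))"
        unfolding opE_def by (rule diag_comm[OF _ shifts_EB]) (simp_all add: f)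
      then show ?thesis using f by (simp add: opK_eq epsp_eq[OF n3])
    qed
    have c5: "opK n i (opF n j f) = vscale (vv powi (- epsp n i j)) (opF n j (opK n i f))"
    proof -
      have "diagop (wW n i) (opF n j f) =
            vscale (vv powi (- (wV n i j - wV n i (j + 1)))) (opF n j (diagop (wW n i) f))"
        unfolding opF_def by (rule diag_comm[OF _ shifts_FB]) (simp_all add: f)
      then show ?thesis using f by (simp add: opK_eq epsp_eq[OF n3])
    qed
    have c6: "vsub (opE n i (opF n j f)) (opF n j (opE n i f)) =
          (if i = j then vscale (inverse (vv - inverse vv))
                           (vsub (opK n i (opKinv n (i + 1) f)) (opKinv n i (opK n (i + 1) f)))
           else (\<lambda>_. 0))"
    proof (cases "i = j")
      case True
      show ?thesis
        using f unfolding True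
        by (simp add: W_QA opK_eq opKinv_eq fun_eq_iff vadd_def vsub_def vscale_def diagop_def
            dLW_def dNW_def power_int_diff power_int_minus field_simps)
    next
      case False
      then have "\<not> [i = j] (mod int n)" using i j by (rule noncong_range[rotated 2])
      then show ?thesis using False f by (simp add: W_QB vsub_def)
    qed
    have c7: "\<not> adjacent n i j \<longrightarrow> opE n i (opE n j f) = opE n j (opE n i f) \<and> opF n i (opF n j f) = opF n j (opF n i f)"
    proof (cases "i = j")
      case True then show ?thesis by simp
    next
      case False
      then have ne: "\<not> [i = j] (mod int n)" using i j by (rule noncong_range[rotated 2])
      show ?thesis
      proof (intro impI conjI)
        assume na: "\<not> adjacent n i j"
        show "opE n i (opE n j f) = opE n j (opE n i f)" by (rule W_CE[OF f na ne])
        show "opF n i (opF n j f) = opF n j (opF n i f)" by (rule W_CF[OF f na ne])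
      qed
    qed
    have c8: "adjacent n i j \<longrightarrow>
           vadd (vsub (opE n i (opE n i (opE n j f))) (vscale (vv + inverse vv) (opE n i (opE n j (opE n i f)))))
                (opE n j (opE n i (opE n i f))) = (\<lambda>_. 0) \<and>
           vadd (vsub (opF n i (opF n i (opF n j f))) (vscale (vv + inverse vv) (opF n i (opF n j (opF n i f)))))
                (opF n j (opF n i (opF n i f))) = (\<lambda>_. 0)"
      using f W_SE W_SF by blast
    show "opK n i (opK n j f) = opK n j (opK n i f) \<and>
        opK n i (opKinv n i f) = f \<and> opKinv n i (opK n i f) = f \<and>
        opK n i (opE n j f) = vscale (vv powi epsp n i j) (opE n j (opK n i f)) \<and>
        opK n i (opF n j f) = vscale (vv powi (- epsp n i j)) (opF n j (opK n i f)) \<and>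
        vsub (opE n i (opF n j f)) (opF n j (opE n i f)) =
          (if i = j then vscale (inverse (vv - inverse vv))
                           (vsub (opK n i (opKinv n (i + 1) f)) (opKinv n i (opK n (i + 1) f)))
           else (\<lambda>_. 0)) \<and>
        (\<not> adjacent n i j \<longrightarrow> opE n i (opE n j f) = opE n j (opE n i f) \<and> opF n i (opF n j f) = opF n j (opF n i f)) \<and>
        (adjacent n i j \<longrightarrow>
           vadd (vsub (opE n i (opE n i (opE n j f))) (vscale (vv + inverse vv) (opE n i (opE n j (opE n i f)))))
                (opE n j (opE n i (opE n i f))) = (\<lambda>_. 0) \<and>
           vadd (vsub (opF n i (opF n i (opF n j f))) (vscale (vv + inverse vv) (opF n i (opF n j (opF n i f)))))
                (opF n j (opF n i (opF n i f))) = (\<lambda>_. 0))"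
      using c1 c2 c4 c5 c6 c7 c8 by blast
  qed
  show ?thesis using extra rel unfolding T_relations_def by blast
qed


end
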